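(* Let $M$ be a complete $\mathrm{CAT}(0)$ space, $\mathcal{C}$ a collection of closed convex subspaces such that $(M,\mathcal{C})$ is a $(\nu,\phi)$--relatively hyperbolic pair. Put $\nu'=4\nu+2\phi(\nu)$, $\nu''=4\nu+2\phi(\nu')$, $\Delta(\nu,\phi)=\nu'+\nu''$. Let $Z\in\mathcal{C}$, $\pi_Z\colon M\to Z$ the closest point projection, $a,b\in M$, and $Q$ the geodesic quadrilateral with vertices $\pi_Z(a),a,b,\pi_Z(b)$. Then either $d(\pi_Z(a),\pi_Z(b))\le\phi(\nu')+2\nu+3\nu'$ or $Q$ is $\Delta(\nu,\phi)$--slim.
   Context: For a geodesic triangle with comparison-tripod map $\pi$: it is $\nu$--thin if all fibers of $\pi$ have diameter $\le\nu$; it is $\nu$--thin relative to $U$ if it is not $\nu$--thin and every fiber either has diameter $\le\nu$ or lies in $N_\nu(U)$. $(M,\mathcal{U})$ has $\nu$--relatively thin triangles if every geodesic triangle is $\nu$--thin or $\nu$--thin relative to some $U\in\mathcal{U}$. $(M,\mathcal{U})$ is a $(\nu,\phi)$--relatively hyperbolic pair ($\phi\colon\mathbb{R}_{\ge0}\to\mathbb{R}_{\ge0}$) if it has $\nu$--relatively thin triangles and $\operatorname{diam}(N_r(F_1)\cap N_r(F_2))\le\phi(r)$ for all $r\ge0$ and distinct $F_1,F_2\in\mathcal{U}$. A polygon is $\mu$--slim if each side lies in the $\mu$--neighborhood of the union of the other sides. *)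

theory Defs
  imports "HOL-Analysis.Analysis"
begin

definition geodesic_path :: "(real \<Rightarrow> 'a::metric_space) \<Rightarrow> 'a \<Rightarrow> 'a \<Rightarrow> bool" where
  "geodesic_path g x y \<longleftrightarrow> g 0 = x \<and> g (dist x y) = y \<and>
     (\<forall>s\<in>{0..dist x y}. \<forall>t\<in>{0..dist x y}. dist (g s) (g t) = \<bar>s - t\<bar>)"

definition geodesic_segment :: "(real \<Rightarrow> 'a::metric_space) \<Rightarrow> 'a \<Rightarrow> 'a \<Rightarrow> 'a set" where
  "geodesic_segment g x y = g ` {0..dist x y}"

definition geodesic_space :: "'a::metric_space itself \<Rightarrow> bool" where
  "geodesic_space _ \<longleftrightarrow> (\<forall>x y::'a. \<exists>g. geodesic_path g x y)"

definition geod_triangle :: "'a::metric_space \<Rightarrow> 'a \<Rightarrow> 'a \<Rightarrow>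
    (real \<Rightarrow> 'a) \<Rightarrow> (real \<Rightarrow> 'a) \<Rightarrow> (real \<Rightarrow> 'a) \<Rightarrow> bool" where
  "geod_triangle x y z p1 p2 p3 \<longleftrightarrow>
     geodesic_path p1 x y \<and> geodesic_path p2 y z \<and> geodesic_path p3 z x"

(* pairs (point on a side, its comparison point in the Euclidean plane = complex numbers),
   for the comparison triangle xb yb zb *)
definition comparison_pairs :: "'a::metric_space \<Rightarrow> 'a \<Rightarrow> 'a \<Rightarrow>
    (real \<Rightarrow> 'a) \<Rightarrow> (real \<Rightarrow> 'a) \<Rightarrow> (real \<Rightarrow> 'a) \<Rightarrow> complex \<Rightarrow> complex \<Rightarrow> complex
    \<Rightarrow> ('a \<times> complex) set" where
  "comparison_pairs x y z p1 p2 p3 xb yb zb =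
     (\<lambda>s. (p1 s, xb + complex_of_real (s / dist x y) * (yb - xb))) ` {0..dist x y} \<union>
     (\<lambda>s. (p2 s, yb + complex_of_real (s / dist y z) * (zb - yb))) ` {0..dist y z} \<union>
     (\<lambda>s. (p3 s, zb + complex_of_real (s / dist z x) * (xb - zb))) ` {0..dist z x}"

definition CAT0 :: "'a::metric_space itself \<Rightarrow> bool" where
  "CAT0 T \<longleftrightarrow> geodesic_space T \<and>
     (\<forall>(x::'a) y z p1 p2 p3. geod_triangle x y z p1 p2 p3 \<longrightarrow>
        (\<forall>xb yb zb. dist xb yb = dist x y \<and> dist yb zb = dist y z \<and> dist zb xb = dist z x \<longrightarrow>
           (\<forall>(a, ab)\<in>comparison_pairs x y z p1 p2 p3 xb yb zb.
              \<forall>(b, bb)\<in>comparison_pairs x y z p1 p2 p3 xb yb zb. dist a b \<le> dist ab bb)))"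

definition geod_convex :: "'a::metric_space set \<Rightarrow> bool" where
  "geod_convex Z \<longleftrightarrow> (\<forall>x\<in>Z. \<forall>y\<in>Z. \<forall>g. geodesic_path g x y \<longrightarrow> geodesic_segment g x y \<subseteq> Z)"

definition closest_proj :: "'a::metric_space set \<Rightarrow> 'a \<Rightarrow> 'a" where
  "closest_proj Z a = (THE p. p \<in> Z \<and> (\<forall>q\<in>Z. dist a p \<le> dist a q))"

definition nbhd :: "real \<Rightarrow> 'a::metric_space set \<Rightarrow> 'a set" where
  "nbhd r U = {p. infdist p U \<le> r}"

definition gprod :: "'a::metric_space \<Rightarrow> 'a \<Rightarrow> 'a \<Rightarrow> real" where
  "gprod w u v = (dist w u + dist w v - dist u v) / 2"

(* the fibers of the comparison-tripod map of the triangle (x,y,z; p1,p2,p3):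
   one fiber for each non-central tripod point (distance s from a vertex, s < leg length),
   plus the central fiber consisting of the three internal points *)
definition tri_fibers :: "'a::metric_space \<Rightarrow> 'a \<Rightarrow> 'a \<Rightarrow>
    (real \<Rightarrow> 'a) \<Rightarrow> (real \<Rightarrow> 'a) \<Rightarrow> (real \<Rightarrow> 'a) \<Rightarrow> 'a set set" where
  "tri_fibers x y z p1 p2 p3 =
     (\<lambda>s. {p1 s, p3 (dist z x - s)}) ` {0..<gprod x y z} \<union>
     (\<lambda>s. {p1 (dist x y - s), p2 s}) ` {0..<gprod y x z} \<union>
     (\<lambda>s. {p2 (dist y z - s), p3 s}) ` {0..<gprod z x y} \<union>
     {{p1 (gprod x y z), p2 (gprod y x z), p3 (gprod z x y)}}"

definition tri_thin :: "real \<Rightarrow> 'a::metric_space \<Rightarrow> 'a \<Rightarrow> 'a \<Rightarrow>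
    (real \<Rightarrow> 'a) \<Rightarrow> (real \<Rightarrow> 'a) \<Rightarrow> (real \<Rightarrow> 'a) \<Rightarrow> bool" where
  "tri_thin \<nu> x y z p1 p2 p3 \<longleftrightarrow> (\<forall>F\<in>tri_fibers x y z p1 p2 p3. diameter F \<le> \<nu>)"

definition tri_thin_rel :: "real \<Rightarrow> 'a::metric_space set \<Rightarrow> 'a \<Rightarrow> 'a \<Rightarrow> 'a \<Rightarrow>
    (real \<Rightarrow> 'a) \<Rightarrow> (real \<Rightarrow> 'a) \<Rightarrow> (real \<Rightarrow> 'a) \<Rightarrow> bool" where
  "tri_thin_rel \<nu> U x y z p1 p2 p3 \<longleftrightarrow> \<not> tri_thin \<nu> x y z p1 p2 p3 \<and>
     (\<forall>F\<in>tri_fibers x y z p1 p2 p3. diameter F \<le> \<nu> \<or> F \<subseteq> nbhd \<nu> U)"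

definition rel_thin_triangles :: "real \<Rightarrow> 'a::metric_space set set \<Rightarrow> bool" where
  "rel_thin_triangles \<nu> \<U> \<longleftrightarrow>
     (\<forall>x y z p1 p2 p3. geod_triangle x y z p1 p2 p3 \<longrightarrow>
        tri_thin \<nu> x y z p1 p2 p3 \<or> (\<exists>U\<in>\<U>. tri_thin_rel \<nu> U x y z p1 p2 p3))"

definition rel_hyp_pair :: "real \<Rightarrow> (real \<Rightarrow> real) \<Rightarrow> 'a::metric_space set set \<Rightarrow> bool" where
  "rel_hyp_pair \<nu> \<phi> \<U> \<longleftrightarrow> rel_thin_triangles \<nu> \<U> \<and>
     (\<forall>r\<ge>0. \<forall>F1\<in>\<U>. \<forall>F2\<in>\<U>. F1 \<noteq> F2 \<longrightarrow>
        bounded (nbhd r F1 \<inter> nbhd r F2) \<and> diameter (nbhd r F1 \<inter> nbhd r F2) \<le> \<phi> r)"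

definition geod_quad :: "'a::metric_space \<Rightarrow> 'a \<Rightarrow> 'a \<Rightarrow> 'a \<Rightarrow>
    (real \<Rightarrow> 'a) \<Rightarrow> (real \<Rightarrow> 'a) \<Rightarrow> (real \<Rightarrow> 'a) \<Rightarrow> (real \<Rightarrow> 'a) \<Rightarrow> bool" where
  "geod_quad v1 v2 v3 v4 q1 q2 q3 q4 \<longleftrightarrow> geodesic_path q1 v1 v2 \<and> geodesic_path q2 v2 v3 \<and>
     geodesic_path q3 v3 v4 \<and> geodesic_path q4 v4 v1"

definition quad_slim :: "real \<Rightarrow> 'a::metric_space \<Rightarrow> 'a \<Rightarrow> 'a \<Rightarrow> 'a \<Rightarrow>
    (real \<Rightarrow> 'a) \<Rightarrow> (real \<Rightarrow> 'a) \<Rightarrow> (real \<Rightarrow> 'a) \<Rightarrow> (real \<Rightarrow> 'a) \<Rightarrow> bool" where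
  "quad_slim \<mu> v1 v2 v3 v4 q1 q2 q3 q4 \<longleftrightarrow>
     (let S1 = geodesic_segment q1 v1 v2; S2 = geodesic_segment q2 v2 v3;
          S3 = geodesic_segment q3 v3 v4; S4 = geodesic_segment q4 v4 v1 in
      S1 \<subseteq> nbhd \<mu> (S2 \<union> S3 \<union> S4) \<and> S2 \<subseteq> nbhd \<mu> (S1 \<union> S3 \<union> S4) \<and>
      S3 \<subseteq> nbhd \<mu> (S1 \<union> S2 \<union> S4) \<and> S4 \<subseteq> nbhd \<mu> (S1 \<union> S2 \<union> S3))"

end

theory Submission
  imports Defs
begin


lemma gp_start: "geodesic_path g x y \<Longrightarrow> g 0 = x"
  by (simp add: geodesic_path_def)
lemma gp_end: "geodesic_path g x y \<Longrightarrow> g (dist x y) = y"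
  by (simp add: geodesic_path_def)
lemma gp_dist: "geodesic_path g x y \<Longrightarrow> s \<in> {0..dist x y} \<Longrightarrow> t \<in> {0..dist x y}
   \<Longrightarrow> dist (g s) (g t) = \<bar>s - t\<bar>"
  by (simp add: geodesic_path_def)
lemma gp_dist_start: "geodesic_path g x y \<Longrightarrow> s \<in> {0..dist x y} \<Longrightarrow> dist x (g s) = s"
  using gp_dist[of g x y 0 s] gp_start[of g x y] by auto
lemma gp_dist_end: "geodesic_path g x y \<Longrightarrow> s \<in> {0..dist x y} \<Longrightarrow> dist (g s) y = dist x y - s"
  using gp_dist[of g x y s "dist x y"] gp_end[of g x y] by auto

lemma gp_rev: assumes "geodesic_path g x y"
  shows "geodesic_path (\<lambda>t. g (dist x y - t)) y x"
  using assms unfolding geodesic_path_def by (auto simp: dist_commute)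

lemma gp_sub: assumes "geodesic_path g x y" "0 \<le> u" "u \<le> v" "v \<le> dist x y"
  shows "geodesic_path (\<lambda>t. g (u + t)) (g u) (g v)"
proof -
  have d: "dist (g u) (g v) = v - u" using gp_dist[OF assms(1), of u v] assms by auto
  show ?thesis unfolding geodesic_path_def d
    using assms gp_dist[OF assms(1)] by auto
qed

lemma gp_sub_rev: assumes "geodesic_path g x y" "0 \<le> u" "u \<le> v" "v \<le> dist x y"
  shows "geodesic_path (\<lambda>t. g (v - t)) (g v) (g u)"
proof -
  have d: "dist (g v) (g u) = v - u" using gp_dist[OF assms(1), of v u] assms by auto
  show ?thesis unfolding geodesic_path_def d
    using assms gp_dist[OF assms(1)] by auto
qed

lemma gp_image: "geodesic_path g x y \<Longrightarrow> s \<in> {0..dist x y} \<Longrightarrow> g s \<in> geodesic_segment g x y"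
  by (simp add: geodesic_segment_def)

lemma comparison_triangle:
  fixes A B C :: real
  assumes "0 \<le> A" "0 \<le> B" "0 \<le> C" "A \<le> B + C" "B \<le> A + C" "C \<le> A + B"
  shows "\<exists>xb yb zb :: complex. dist xb yb = A \<and> dist yb zb = B \<and> dist zb xb = C"
proof (cases "A = 0")
  case True
  then have "B = C" using assms by auto
  then show ?thesis using True assms
    by (intro exI[of _ 0] exI[of _ "0"] exI[of _ "complex_of_real C"]) (auto simp: dist_norm)
next
  case False
  then have Ap: "A > 0" using assms by auto
  define u where "u = (A^2 + C^2 - B^2) / (2*A)"
  have h1: "A^2 + C^2 - B^2 \<le> 2*A*C"
  proof -
    have "\<bar>A - C\<bar> \<le> B" using assms by auto
    then have "(A - C)^2 \<le> B^2" using abs_le_square_iff[of "A-C" B] assms by auto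
    then show ?thesis by (simp add: power2_eq_square algebra_simps)
  qed
  have h2: "- (2*A*C) \<le> A^2 + C^2 - B^2"
  proof -
    have "B^2 \<le> (A + C)^2" using assms by (intro power_mono) auto
    then show ?thesis by (simp add: power2_eq_square algebra_simps)
  qed
  have "\<bar>u\<bar> \<le> C" using h1 h2 Ap unfolding u_def
    by (auto simp: abs_le_iff divide_le_eq le_divide_eq algebra_simps)
  then have uC: "u^2 \<le> C^2" using abs_le_square_iff[of u C] assms by auto
  define v where "v = sqrt (C^2 - u^2)"
  have v2: "v^2 = C^2 - u^2" unfolding v_def using uC by simp
  have e1: "cmod (Complex u v) = C"
    using v2 assms by (simp add: cmod_def)
  have e2: "cmod (Complex (A - u) (- v)) = B"
  proof -
    have "(A - u)^2 + (-v)^2 = B^2"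
      using v2 Ap unfolding u_def by (simp add: power2_eq_square field_simps)
    then show ?thesis using assms by (simp add: cmod_def)
  qed
  have f1: "dist (0::complex) (complex_of_real A) = A" using Ap by (simp add: dist_norm)
  have "complex_of_real A - Complex u v = Complex (A - u) (- v)"
    by (simp add: complex_eq_iff)
  then have f2: "dist (complex_of_real A) (Complex u v) = B" using e2 by (simp add: dist_norm)
  have f3: "dist (Complex u v) 0 = C" using e1 by (simp add: dist_norm)
  show ?thesis using f1 f2 f3 by blast
qed

lemma cat0_geodesic: "CAT0 TYPE('a::metric_space) \<Longrightarrow> \<exists>g. geodesic_path g (x::'a) y"
  unfolding CAT0_def geodesic_space_def by blast

lemma cat0_cmp:
  fixes x y z :: "'a::metric_space"
  assumes "CAT0 TYPE('a)" "geod_triangle x y z p1 p2 p3"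
    "dist xb yb = dist x y" "dist yb zb = dist y z" "dist zb xb = dist z x"
    "(u, ub) \<in> comparison_pairs x y z p1 p2 p3 xb yb zb"
    "(w, wb) \<in> comparison_pairs x y z p1 p2 p3 xb yb zb"
  shows "dist u w \<le> dist ub wb"
proof -
  have "\<forall>(a, ab)\<in>comparison_pairs x y z p1 p2 p3 xb yb zb.
              \<forall>(b, bb)\<in>comparison_pairs x y z p1 p2 p3 xb yb zb. dist a b \<le> dist ab bb"
    using assms(1,2,3,4,5) unfolding CAT0_def by blast
  then show ?thesis using assms(6,7) by fastforce
qed

lemma cpx_scale: fixes xb yb :: complex
  assumes "dist xb yb = d" "0 \<le> l" "l \<le> 1"
  shows "complex_of_real (l * d / d) * (yb - xb) = complex_of_real l * (yb - xb)"
proof (cases "d = 0")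
  case True then show ?thesis using assms by simp
next
  case False then show ?thesis by simp
qed

lemma cat0_vertex:
  fixes x y1 y2 :: "'a::metric_space"
  assumes cat: "CAT0 TYPE('a)" and g1: "geodesic_path c1 x y1" and g2: "geodesic_path c2 x y2"
    and l: "0 \<le> l" "l \<le> 1"
  shows "dist (c1 (l * dist x y1)) (c2 (l * dist x y2)) \<le> l * dist y1 y2"
proof -
  obtain m where m: "geodesic_path m y1 y2" using cat0_geodesic[OF cat] by blast
  define c3 where "c3 = (\<lambda>t. c2 (dist x y2 - t))"
  have g3: "geodesic_path c3 y2 x" unfolding c3_def using gp_rev[OF g2] .
  have tri: "geod_triangle x y1 y2 c1 m c3" unfolding geod_triangle_def using g1 m g3 by auto
  obtain xb yb zb :: complex where cmp: "dist xb yb = dist x y1" "dist yb zb = dist y1 y2"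
     "dist zb xb = dist y2 x"
    using comparison_triangle[of "dist x y1" "dist y1 y2" "dist y2 x"]
    by (metis dist_commute dist_triangle dist_triangle2 zero_le_dist)
  define d1 where "d1 = dist x y1"
  define d2 where "d2 = dist x y2"
  have d2': "dist y2 x = d2" unfolding d2_def by (simp add: dist_commute)
  have P1: "(c1 (l * d1), xb + complex_of_real (l * d1 / d1) * (yb - xb))
      \<in> comparison_pairs x y1 y2 c1 m c3 xb yb zb"
    unfolding comparison_pairs_def d1_def using l
    by (intro UnI1) (auto intro!: image_eqI[where x="l * dist x y1"] mult_left_le_one_le)
  have P2: "(c3 ((1 - l) * d2), zb + complex_of_real ((1 - l) * d2 / d2) * (xb - zb))
      \<in> comparison_pairs x y1 y2 c1 m c3 xb yb zb"
    unfolding comparison_pairs_def d2' using l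
    by (intro UnI2) (auto intro!: image_eqI[where x="(1 - l) * d2"] mult_left_le_one_le simp: d2_def)
  have c3eq: "c3 ((1 - l) * d2) = c2 (l * d2)" unfolding c3_def d2_def by (simp add: algebra_simps)
  have "dist (c1 (l * d1)) (c2 (l * d2)) \<le>
     dist (xb + complex_of_real (l * d1 / d1) * (yb - xb)) (zb + complex_of_real ((1 - l) * d2 / d2) * (xb - zb))"
    using cat0_cmp[OF cat tri cmp(1,2,3) P1 P2] c3eq by simp
  also have "\<dots> = dist (xb + complex_of_real l * (yb - xb)) (zb + complex_of_real (1 - l) * (xb - zb))"
  proof -
    have e1: "complex_of_real (l * d1 / d1) * (yb - xb) = complex_of_real l * (yb - xb)"
      using cpx_scale[of xb yb d1 l] cmp(1) l unfolding d1_def by blast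
    have e2: "complex_of_real ((1 - l) * d2 / d2) * (xb - zb) = complex_of_real (1 - l) * (xb - zb)"
      using cpx_scale[of zb xb d2 "1-l"] cmp(3) d2' l by simp
    show ?thesis by (simp only: e1 e2)
  qed
  also have "\<dots> = cmod (complex_of_real l * (yb - zb))"
    by (simp add: dist_norm algebra_simps)
  also have "\<dots> = l * dist y1 y2" using cmp l by (simp add: norm_mult dist_norm)
  finally show ?thesis unfolding d1_def d2_def .
qed

lemma cat0_convex:
  fixes x1 y1 x2 y2 :: "'a::metric_space"
  assumes cat: "CAT0 TYPE('a)" and g1: "geodesic_path c1 x1 y1" and g2: "geodesic_path c2 x2 y2"
    and l: "0 \<le> l" "l \<le> 1"
  shows "dist (c1 (l * dist x1 y1)) (c2 (l * dist x2 y2)) \<le> (1 - l) * dist x1 x2 + l * dist y1 y2"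
proof -
  obtain c where c: "geodesic_path c x1 y2" using cat0_geodesic[OF cat] by blast
  have A: "dist (c1 (l * dist x1 y1)) (c (l * dist x1 y2)) \<le> l * dist y1 y2"
    using cat0_vertex[OF cat g1 c l] .
  have rc: "geodesic_path (\<lambda>t. c (dist x1 y2 - t)) y2 x1" using gp_rev[OF c] .
  have rc2: "geodesic_path (\<lambda>t. c2 (dist x2 y2 - t)) y2 x2" using gp_rev[OF g2] .
  have B0: "dist (c (dist x1 y2 - (1 - l) * dist y2 x1)) (c2 (dist x2 y2 - (1 - l) * dist y2 x2))
      \<le> (1 - l) * dist x1 x2"
    using cat0_vertex[OF cat rc rc2, of "1 - l"] l by simp
  have B: "dist (c (l * dist x1 y2)) (c2 (l * dist x2 y2)) \<le> (1 - l) * dist x1 x2"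
    using B0 by (simp add: dist_commute algebra_simps)
  show ?thesis using A B dist_triangle[of "c1 (l * dist x1 y1)" "c2 (l * dist x2 y2)" "c (l * dist x1 y2)"]
    by linarith
qed

lemma apollonius: fixes xb yb zb :: complex
  shows "(cmod (zb - (xb + complex_of_real (1/2) * (yb - xb))))^2 =
     (cmod (zb - xb))^2 / 2 + (cmod (zb - yb))^2 / 2 - (cmod (xb - yb))^2 / 4"
  unfolding cmod_power2 by (simp add: power2_eq_square field_simps)

lemma cat0_CN:
  fixes x y z :: "'a::metric_space"
  assumes cat: "CAT0 TYPE('a)" and g: "geodesic_path g x y"
  shows "(dist z (g (dist x y / 2)))^2 \<le> (dist z x)^2 / 2 + (dist z y)^2 / 2 - (dist x y)^2 / 4"
proof -
  obtain p2 where p2: "geodesic_path p2 y z" using cat0_geodesic[OF cat] by blast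
  obtain p3 where p3: "geodesic_path p3 z x" using cat0_geodesic[OF cat] by blast
  have tri: "geod_triangle x y z g p2 p3" unfolding geod_triangle_def using g p2 p3 by auto
  obtain xb yb zb :: complex where cmp: "dist xb yb = dist x y" "dist yb zb = dist y z"
     "dist zb xb = dist z x"
    using comparison_triangle[of "dist x y" "dist y z" "dist z x"]
    by (metis dist_commute dist_triangle dist_triangle2 zero_le_dist)
  define d where "d = dist x y"
  have P1: "(g (d / 2), xb + complex_of_real ((d/2) / d) * (yb - xb))
      \<in> comparison_pairs x y z g p2 p3 xb yb zb"
    unfolding comparison_pairs_def d_def
    by (intro UnI1) (auto intro!: image_eqI[where x="dist x y / 2"])
  have P2: "(p3 0, zb + complex_of_real (0 / dist z x) * (xb - zb))
      \<in> comparison_pairs x y z g p2 p3 xb yb zb"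
    unfolding comparison_pairs_def
    by (intro UnI2) (auto intro!: image_eqI[where x="0"])
  have z: "p3 0 = z" using gp_start[OF p3] .
  have e1: "complex_of_real ((d/2) / d) * (yb - xb) = complex_of_real (1/2) * (yb - xb)"
    using cpx_scale[of xb yb d "1/2"] cmp(1) unfolding d_def by simp
  have e0: "zb + complex_of_real (0 / dist z x) * (xb - zb) = zb" by simp
  have "dist (g (d/2)) z \<le> dist (xb + complex_of_real (1/2) * (yb - xb)) zb"
    using cat0_cmp[OF cat tri cmp P1 P2] by (simp only: e0 e1 z)
  then have le: "dist z (g (d/2)) \<le> cmod (zb - (xb + complex_of_real (1/2) * (yb - xb)))"
    by (simp add: dist_commute dist_norm)
  have "(dist z (g (d/2)))^2 \<le> (cmod (zb - (xb + complex_of_real (1/2) * (yb - xb))))^2"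
    using le by (intro power_mono) auto
  also have "\<dots> = (dist z x)^2 / 2 + (dist z y)^2 / 2 - (dist x y)^2 / 4"
  proof -
    have c1: "cmod (zb - xb) = dist z x" using cmp(3) by (simp add: dist_norm)
    have c2: "cmod (zb - yb) = dist z y" using cmp(2) by (simp add: dist_norm norm_minus_commute dist_commute)
    have c3: "cmod (xb - yb) = dist x y" using cmp(1) by (simp add: dist_norm)
    show ?thesis unfolding apollonius c1 c2 c3 by simp
  qed
  finally show ?thesis unfolding d_def .
qed

lemma infdist_lessE: assumes "A \<noteq> {}" "infdist x A < r" obtains y where "y \<in> A" "dist x y < r"
  using cInf_lessD[of "dist x ` A" r] assms infdist_notempty[OF assms(1), of x] by auto

lemma midpoint_in:
  fixes x y :: "'a::metric_space"
  assumes cat: "CAT0 TYPE('a)" and Z: "geod_convex Z" "x \<in> Z" "y \<in> Z"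
  obtains m where "m \<in> Z" "\<And>z. (dist z m)^2 \<le> (dist z x)^2 / 2 + (dist z y)^2 / 2 - (dist x y)^2 / 4"
proof -
  obtain g where g: "geodesic_path g x y" using cat0_geodesic[OF cat] by blast
  have h: "dist x y / 2 \<in> {0..dist x y}" by auto
  have "g (dist x y / 2) \<in> Z" using Z g h unfolding geod_convex_def geodesic_segment_def by blast
  then show ?thesis using that cat0_CN[OF cat g] by blast
qed

lemma proj_unique_exists:
  fixes a :: "'a::complete_space"
  assumes cat: "CAT0 TYPE('a)" and Z: "Z \<noteq> {}" "closed Z" "geod_convex Z"
  shows "\<exists>!p. p \<in> Z \<and> (\<forall>q\<in>Z. dist a p \<le> dist a q)"
proof -
  define D where "D = infdist a Z"
  have D0: "0 \<le> D" unfolding D_def by (rule infdist_nonneg)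
  have "\<forall>n. \<exists>z. z \<in> Z \<and> dist a z < D + inverse (real (Suc n))"
  proof
    fix n
    have "infdist a Z < D + inverse (real (Suc n))" unfolding D_def by simp
    then show "\<exists>z. z \<in> Z \<and> dist a z < D + inverse (real (Suc n))"
      using infdist_lessE[OF Z(1)] by metis
  qed
  then obtain zs where zs: "\<And>n. zs n \<in> Z" "\<And>n. dist a (zs n) < D + inverse (real (Suc n))"
    by metis
  have key: "(dist (zs m) (zs n))^2 \<le> 4 * ((2*D+1) * inverse (real (Suc m))) + 4 * ((2*D+1) * inverse (real (Suc n)))"
    for m n
  proof -
    obtain w where w: "w \<in> Z" "(dist a w)^2 \<le> (dist a (zs m))^2 / 2 + (dist a (zs n))^2 / 2 - (dist (zs m) (zs n))^2 / 4"
      using midpoint_in[OF cat Z(3) zs(1)[of m] zs(1)[of n]] by blast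
    have "D \<le> dist a w" unfolding D_def using infdist_le[OF w(1)] .
    then have Dw: "D^2 \<le> (dist a w)^2" using D0 by (intro power_mono) auto
    have bnd: "(dist a (zs k))^2 \<le> D^2 + (2*D+1) * inverse (real (Suc k))" for k
    proof -
      define t where "t = inverse (real (Suc k))"
      have t: "0 < t" "t \<le> 1" unfolding t_def by (auto simp: inverse_le_1_iff)
      have "dist a (zs k) \<le> D + t" using zs(2)[of k] unfolding t_def by simp
      then have "(dist a (zs k))^2 \<le> (D + t)^2" by (intro power_mono) auto
      also have "\<dots> = D^2 + (2*D + t) * t" by (simp add: power2_eq_square algebra_simps)
      also have "\<dots> \<le> D^2 + (2*D+1) * t" using t D0 by (intro add_left_mono mult_right_mono) auto
      finally show ?thesis unfolding t_def .
    qed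
    have nn: "0 \<le> (2*D+1) * inverse (real (Suc k))" for k using D0 by (intro mult_nonneg_nonneg) auto
    define tm where "tm = (2*D+1) * inverse (real (Suc m))"
    define tn where "tn = (2*D+1) * inverse (real (Suc n))"
    define dd where "dd = (dist (zs m) (zs n))^2"
    define am where "am = (dist a (zs m))^2"
    define an where "an = (dist a (zs n))^2"
    define aw where "aw = (dist a w)^2"
    have "aw \<le> am / 2 + an / 2 - dd / 4" "D^2 \<le> aw" "am \<le> D^2 + tm" "an \<le> D^2 + tn" "0 \<le> tm" "0 \<le> tn"
      using w(2) Dw bnd[of m] bnd[of n] nn[of m] nn[of n] unfolding tm_def tn_def dd_def am_def an_def aw_def
      by simp_all
    then have "dd \<le> 4 * tm + 4 * tn" by linarith
    then show ?thesis unfolding tm_def tn_def dd_def .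
  qed
  have cau: "Cauchy zs"
  proof (rule metric_CauchyI)
    fix e :: real assume e: "0 < e"
    obtain N0 :: nat where N0: "8 * (2*D+1) / e^2 < real N0"
      using reals_Archimedean2 by blast
    define N where "N = N0"
    have N: "8 * (2*D+1) / e^2 < real (Suc N)" using N0 unfolding N_def by simp
    have "\<forall>m\<ge>N. \<forall>n\<ge>N. dist (zs m) (zs n) < e"
    proof (intro allI impI)
      fix m n assume mn: "N \<le> m" "N \<le> n"
      have inv: "inverse (real (Suc k)) \<le> inverse (real (Suc N))" if "N \<le> k" for k
        using that by (intro le_imp_inverse_le) auto
      have pos: "0 < 2*D+1" using D0 by simp
      have i1: "(2*D+1) * inverse (real (Suc m)) \<le> (2*D+1) * inverse (real (Suc N))"
        using inv[OF mn(1)] pos by (intro mult_left_mono) auto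
      have i2: "(2*D+1) * inverse (real (Suc n)) \<le> (2*D+1) * inverse (real (Suc N))"
        using inv[OF mn(2)] pos by (intro mult_left_mono) auto
      have "(dist (zs m) (zs n))^2 \<le> 8 * ((2*D+1) * inverse (real (Suc N)))"
        using key[of m n] i1 i2 by linarith
      also have "\<dots> < e^2"
      proof -
        have "8 * (2*D+1) / e^2 < real (Suc N)" using N .
        then have "8 * (2*D+1) < real (Suc N) * e^2" using e by (simp add: divide_less_eq)
        then have "8 * (2*D+1) / real (Suc N) < e^2" by (simp add: divide_less_eq mult.commute)
        moreover have "8 * ((2*D+1) * inverse (real (Suc N))) = 8 * (2*D+1) / real (Suc N)"
          by (simp add: divide_inverse)
        ultimately show ?thesis by linarith
      qed
      finally have "(dist (zs m) (zs n))^2 < e^2" .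
      then show "dist (zs m) (zs n) < e"
        by (rule power_less_imp_less_base) (use e in auto)
    qed
    then show "\<exists>M. \<forall>m\<ge>M. \<forall>n\<ge>M. dist (zs m) (zs n) < e" by blast
  qed
  then obtain l where l: "zs \<longlonglongrightarrow> l" using Cauchy_convergent convergent_def by blast
  have lZ: "l \<in> Z" using closed_sequentially[OF Z(2) zs(1) l] .
  have lim1: "(\<lambda>n. dist a (zs n)) \<longlonglongrightarrow> dist a l" by (intro tendsto_intros l)
  have lim2: "(\<lambda>n. D + inverse (real (Suc n))) \<longlonglongrightarrow> D + 0"
    by (intro tendsto_add tendsto_const LIMSEQ_inverse_real_of_nat)
  have "dist a l \<le> D + 0"
    by (rule LIMSEQ_le[OF lim1 lim2]) (use zs(2) less_imp_le in blast)
  then have dl: "dist a l \<le> D" by simp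
  have lmin: "\<forall>q\<in>Z. dist a l \<le> dist a q"
  proof
    fix q assume q: "q \<in> Z"
    have "D \<le> dist a q" unfolding D_def by (rule infdist_le[OF q])
    then show "dist a l \<le> dist a q" using dl by linarith
  qed
  show ?thesis
  proof (rule ex1I[of _ l])
    show "l \<in> Z \<and> (\<forall>q\<in>Z. dist a l \<le> dist a q)" using lZ lmin by blast
  next
    fix p assume p: "p \<in> Z \<and> (\<forall>q\<in>Z. dist a p \<le> dist a q)"
    have e1: "dist a p \<le> dist a l" using p lZ by blast
    have e2: "dist a l \<le> dist a p" using lmin p by blast
    have eq: "dist a p = dist a l" using e1 e2 by linarith
    obtain w where w: "w \<in> Z" "(dist a w)^2 \<le> (dist a p)^2 / 2 + (dist a l)^2 / 2 - (dist p l)^2 / 4"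
      using midpoint_in[OF cat Z(3), of p l] p lZ by blast
    have "dist a p \<le> dist a w" using p w by blast
    then have "(dist a p)^2 \<le> (dist a w)^2" by (intro power_mono) auto
    moreover have "(dist a w)^2 \<le> (dist a p)^2 - (dist p l)^2 / 4" using w(2) eq by simp
    ultimately have "(dist p l)^2 \<le> 0" by linarith
    then show "p = l" by simp
  qed
qed

lemma closest_proj_props:
  fixes a :: "'a::complete_space"
  assumes cat: "CAT0 TYPE('a)" and Z: "Z \<noteq> {}" "closed Z" "geod_convex Z"
  shows "closest_proj Z a \<in> Z" "\<And>q. q \<in> Z \<Longrightarrow> dist a (closest_proj Z a) \<le> dist a q"
  using theI'[OF proj_unique_exists[OF assms, of a]] unfolding closest_proj_def by auto



lemma fib_x: "s \<in> {0..<gprod x y z} \<Longrightarrow> {p1 s, p3 (dist z x - s)} \<in> tri_fibers x y z p1 p2 p3"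
  unfolding tri_fibers_def by blast
lemma fib_y: "s \<in> {0..<gprod y x z} \<Longrightarrow> {p1 (dist x y - s), p2 s} \<in> tri_fibers x y z p1 p2 p3"
  unfolding tri_fibers_def by blast
lemma fib_z: "s \<in> {0..<gprod z x y} \<Longrightarrow> {p2 (dist y z - s), p3 s} \<in> tri_fibers x y z p1 p2 p3"
  unfolding tri_fibers_def by blast

lemma diam2: "diameter {u, v} \<le> r \<Longrightarrow> dist u v \<le> (r::real)"
  using diameter_bounded_bound[of "{u,v}" u v] by (simp add: finite_imp_bounded)

lemma fiber2:
  assumes "\<forall>F\<in>tri_fibers x y z p1 p2 p3. diameter F \<le> \<nu> \<or> F \<subseteq> nbhd \<nu> U"
    "{u, v} \<in> tri_fibers x y z p1 p2 p3"
  shows "dist u v \<le> \<nu> \<or> (infdist u U \<le> \<nu> \<and> infdist v U \<le> \<nu>)"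
  using assms diam2[of u v \<nu>] unfolding nbhd_def by fastforce

lemma rel_thin_get:
  assumes "rel_hyp_pair \<nu> \<phi> C" "geod_triangle x y z p1 p2 p3" "Z \<in> C"
  shows "\<exists>U\<in>C. \<forall>F\<in>tri_fibers x y z p1 p2 p3. diameter F \<le> \<nu> \<or> F \<subseteq> nbhd \<nu> U"
proof -
  have "tri_thin \<nu> x y z p1 p2 p3 \<or> (\<exists>U\<in>C. tri_thin_rel \<nu> U x y z p1 p2 p3)"
    using assms(1,2) unfolding rel_hyp_pair_def rel_thin_triangles_def by blast
  then show ?thesis unfolding tri_thin_def tri_thin_rel_def using assms(3) by blast
qed

lemma W_bound:
  assumes "rel_hyp_pair \<nu> \<phi> C" "U \<in> C" "Z \<in> C" "U \<noteq> Z" "0 \<le> r"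
    "infdist u U \<le> r" "infdist u Z \<le> r" "infdist v U \<le> r" "infdist v Z \<le> r"
  shows "dist u v \<le> \<phi> r"
proof -
  have b: "bounded (nbhd r U \<inter> nbhd r Z)" "diameter (nbhd r U \<inter> nbhd r Z) \<le> \<phi> r"
    using assms(1-5) unfolding rel_hyp_pair_def by blast+
  have "u \<in> nbhd r U \<inter> nbhd r Z" "v \<in> nbhd r U \<inter> nbhd r Z" using assms(6-9) unfolding nbhd_def by auto
  then show ?thesis using diameter_bounded_bound[OF b(1)] b(2) by fastforce
qed

lemma gprod_sym: "gprod x y z = gprod x z y"
  unfolding gprod_def by (simp add: dist_commute algebra_simps)
lemma gprod_sum: "gprod x y z + gprod y x z = dist x y"
  unfolding gprod_def by (simp add: dist_commute field_simps)
lemma gprod_nonneg: "0 \<le> gprod x y z"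
  unfolding gprod_def using dist_triangle[of y z x] by (simp add: dist_commute)
lemma gprod_le: "gprod x y z \<le> dist x y"
  using gprod_sum[of x y z] gprod_nonneg[of y x z] by linarith

lemma proj_along:
  assumes "Z \<noteq> {}" "p \<in> Z" "\<forall>z\<in>Z. dist a p \<le> dist a z" "dist a y + dist y p = dist a p"
  shows "dist y p \<le> infdist y Z"
proof -
  have "\<forall>z\<in>Z. dist y p \<le> dist y z"
  proof
    fix z assume "z \<in> Z"
    then have "dist a p \<le> dist a z" using assms(3) by blast
    also have "\<dots> \<le> dist a y + dist y z" by (rule dist_triangle)
    finally show "dist y p \<le> dist y z" using assms(4) by linarith
  qed
  then show ?thesis unfolding infdist_notempty[OF assms(1)] by (intro cINF_greatest assms(1)) auto
qed



lemma main_L: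
  fixes a b p q :: "'a::metric_space"
  assumes geo: "\<And>x y::'a. \<exists>g. geodesic_path g x y"
  and Zc: "geod_convex Z" "Z \<in> C" "Z \<noteq> {}"
  and nu: "\<nu> \<ge> 0" and phi: "\<forall>r\<ge>0. \<phi> r \<ge> 0"
  and rh: "rel_hyp_pair \<nu> \<phi> C"
  and pZ: "p \<in> Z" "\<forall>z\<in>Z. dist a p \<le> dist a z"
  and qZ: "q \<in> Z" "\<forall>z\<in>Z. dist b q \<le> dist b z"
  and D: "\<phi> (4*\<nu>+2*\<phi> \<nu>) + 14*\<nu> + 6*\<phi> \<nu> < dist p q"
  and c: "geodesic_path c a b"
  and eps: "\<epsilon> > 0"
  shows "\<exists>s\<in>{0..dist a b}. dist (c s) p \<le> 3*\<nu> + \<phi> \<nu> + \<phi> (4*\<nu>+2*\<phi> \<nu>) + \<epsilon>"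
proof -
  define \<phi>0 where "\<phi>0 = \<phi> \<nu>"
  define \<nu>' where "\<nu>' = 4*\<nu>+2*\<phi>0"
  define \<phi>1 where "\<phi>1 = \<phi> \<nu>'"
  have \<phi>0: "0 \<le> \<phi>0" unfolding \<phi>0_def using phi nu by blast
  have \<nu>': "\<nu> + \<phi>0 \<le> \<nu>'" "\<nu> \<le> \<nu>'" "0 \<le> \<nu>'" unfolding \<nu>'_def using nu \<phi>0 by auto
  have \<phi>1: "0 \<le> \<phi>1" unfolding \<phi>1_def using phi \<nu>' by blast
  define Dpq where "Dpq = dist p q"
  have Dbig: "\<phi>1 + 14*\<nu> + 6*\<phi>0 < Dpq" using D unfolding Dpq_def \<phi>1_def \<nu>'_def \<phi>0_def .
  obtain e where e: "geodesic_path e p q" using geo by blast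
  obtain f where f: "geodesic_path f q b" using geo by blast
  obtain g where g: "geodesic_path g b p" using geo by blast
  obtain h where h: "geodesic_path h p a" using geo by blast
  have eZ: "s \<in> {0..dist p q} \<Longrightarrow> e s \<in> Z" for s
    using Zc(1) pZ(1) qZ(1) e unfolding geod_convex_def geodesic_segment_def by blast
  have eZ0: "s \<in> {0..dist p q} \<Longrightarrow> infdist (e s) Z = 0" for s using eZ infdist_zero by blast
  define Dbp where "Dbp = dist b p"
  define G where "G = (\<lambda>\<sigma>. g (Dbp - \<sigma>))"
  have Gp: "\<sigma> \<in> {0..Dbp} \<Longrightarrow> dist (G \<sigma>) p = \<sigma>" for \<sigma>
    using gp_dist_end[OF g, of "Dbp - \<sigma>"] unfolding G_def Dbp_def by auto
  have GG: "\<sigma> \<in> {0..Dbp} \<Longrightarrow> \<sigma>' \<in> {0..Dbp} \<Longrightarrow> dist (G \<sigma>) (G \<sigma>') = \<bar>\<sigma> - \<sigma>'\<bar>" for \<sigma> \<sigma>'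
    using gp_dist[OF g, of "Dbp - \<sigma>" "Dbp - \<sigma>'"] unfolding G_def Dbp_def by auto
  have hf: "s \<in> {0..dist q b} \<Longrightarrow> s \<le> infdist (f s) Z" for s
  proof -
    assume s: "s \<in> {0..dist q b}"
    have 1: "dist (f s) q = s" using gp_dist_start[OF f s] by (simp add: dist_commute)
    have 2: "dist b (f s) = dist q b - s" using gp_dist_end[OF f s] by (simp add: dist_commute)
    have "dist (f s) q \<le> infdist (f s) Z"
      using proj_along[OF Zc(3) qZ(1) qZ(2), of "f s"] 1 2 by (simp add: dist_commute)
    then show ?thesis using 1 by simp
  qed
  have hh: "s \<in> {0..dist p a} \<Longrightarrow> s \<le> infdist (h s) Z" for s
  proof -
    assume s: "s \<in> {0..dist p a}"
    have 1: "dist (h s) p = s" using gp_dist_start[OF h s] by (simp add: dist_commute)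
    have 2: "dist a (h s) = dist p a - s" using gp_dist_end[OF h s] by (simp add: dist_commute)
    have "dist (h s) p \<le> infdist (h s) Z"
      using proj_along[OF Zc(3) pZ(1) pZ(2), of "h s"] 1 2 by (simp add: dist_commute)
    then show ?thesis using 1 by simp
  qed
  have hp: "s \<in> {0..dist p a} \<Longrightarrow> dist (h s) p = s" for s
    using gp_dist_start[OF h] by (simp add: dist_commute)
  have T2: "geod_triangle p q b e f g" unfolding geod_triangle_def using e f g by auto
  have T1: "geod_triangle p a b h c g" unfolding geod_triangle_def using h c g by auto
  obtain U2 where U2: "U2 \<in> C" "\<forall>F\<in>tri_fibers p q b e f g. diameter F \<le> \<nu> \<or> F \<subseteq> nbhd \<nu> U2"
    using rel_thin_get[OF rh T2 Zc(2)] by blast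
  obtain U1 where U1: "U1 \<in> C" "\<forall>F\<in>tri_fibers p a b h c g. diameter F \<le> \<nu> \<or> F \<subseteq> nbhd \<nu> U1"
    using rel_thin_get[OF rh T1 Zc(2)] by blast
  have Wb: "dist u v \<le> \<phi> r" if "U \<in> C" "U \<noteq> Z" "0 \<le> r"
    "infdist u U \<le> r" "infdist u Z \<le> r" "infdist v U \<le> r" "infdist v Z \<le> r" for U u v r
    using W_bound[OF rh that(1) Zc(2) that(2-7)] .
  have step1: "gprod q p b \<le> \<nu> + \<phi>0"
  proof (rule ccontr)
    assume "\<not> ?thesis"
    then have k: "\<nu> + \<phi>0 < gprod q p b" by simp
    define \<delta> where "\<delta> = (gprod q p b - \<nu> - \<phi>0) / 3"
    have \<delta>: "0 < \<delta>" unfolding \<delta>_def using k by simp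
    have \<delta>3: "3 * \<delta> = gprod q p b - \<nu> - \<phi>0" unfolding \<delta>_def by simp
    have kle: "gprod q p b \<le> Dpq" using gprod_le[of q p b] unfolding Dpq_def by (simp add: dist_commute)
    have kqb: "gprod q p b \<le> dist q b" using gprod_le[of q b p] gprod_sym[of q p b] by simp
    have fat: "infdist (e (Dpq - s)) U2 \<le> \<nu> \<and> U2 \<noteq> Z"
      if s: "\<nu> < s" "s < gprod q p b" for s
    proof -
      have sr: "s \<in> {0..<gprod q p b}" using s nu by auto
      have F: "{e (dist p q - s), f s} \<in> tri_fibers p q b e f g" using fib_y[OF sr] .
      have fs: "s \<le> infdist (f s) Z" using hf[of s] s nu kqb by auto
      have ez: "infdist (e (dist p q - s)) Z = 0" using eZ0[of "dist p q - s"] s kle nu unfolding Dpq_def by auto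
      have "dist (e (dist p q - s)) (f s) \<le> \<nu> \<or> (infdist (e (dist p q - s)) U2 \<le> \<nu> \<and> infdist (f s) U2 \<le> \<nu>)"
        using fiber2[OF U2(2) F] .
      moreover have "\<not> dist (e (dist p q - s)) (f s) \<le> \<nu>"
        using infdist_triangle[of "f s" Z "e (dist p q - s)"] ez fs s by (simp add: dist_commute)
      ultimately have i: "infdist (e (dist p q - s)) U2 \<le> \<nu>" "infdist (f s) U2 \<le> \<nu>" by auto
      have "U2 \<noteq> Z" using i(2) fs s by auto
      then show ?thesis using i unfolding Dpq_def by auto
    qed
    define s1 where "s1 = \<nu> + \<delta>"
    define s2 where "s2 = \<nu> + \<phi>0 + 2*\<delta>"
    have "\<nu> < s1" "s1 < gprod q p b" "\<nu> < s2" "s2 < gprod q p b"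
      using \<delta> \<delta>3 \<phi>0 k unfolding s1_def s2_def by linarith+
    then have f1: "infdist (e (Dpq - s1)) U2 \<le> \<nu>" "U2 \<noteq> Z" and f2: "infdist (e (Dpq - s2)) U2 \<le> \<nu>"
      using fat by blast+
    have r1: "Dpq - s1 \<in> {0..dist p q}" "Dpq - s2 \<in> {0..dist p q}"
      using \<delta> \<delta>3 \<phi>0 k kle nu unfolding s1_def s2_def Dpq_def by auto
    have "dist (e (Dpq - s1)) (e (Dpq - s2)) \<le> \<phi> \<nu>"
      using Wb[OF U2(1) f1(2) nu f1(1) _ f2] eZ0[OF r1(1)] eZ0[OF r1(2)] nu by auto
    moreover have "dist (e (Dpq - s1)) (e (Dpq - s2)) = \<phi>0 + \<delta>"
      using gp_dist[OF e r1] \<delta> \<phi>0 unfolding s1_def s2_def by auto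
    ultimately show False using \<delta> unfolding \<phi>0_def by simp
  qed
  define K0 where "K0 = gprod p q b"
  have K0a: "Dpq - (\<nu> + \<phi>0) \<le> K0" using step1 gprod_sum[of p q b] unfolding K0_def Dpq_def by linarith
  have K0b: "K0 \<le> Dbp" using gprod_le[of p b q] gprod_sym[of p q b] unfolding K0_def Dbp_def
    by (simp add: dist_commute)
  have K0c: "K0 \<le> Dpq" using gprod_le[of p q b] unfolding K0_def Dpq_def .
  have per3: "infdist (G \<sigma>) Z \<le> \<nu> \<or> (U2 \<noteq> Z \<and> infdist (e \<sigma>) U2 \<le> \<nu>)" if s: "\<sigma> \<in> {0..<K0}" for \<sigma>
  proof -
    have F: "{e \<sigma>, G \<sigma>} \<in> tri_fibers p q b e f g"
      using fib_x[of \<sigma> p q b e g f] s unfolding K0_def G_def Dbp_def by auto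
    have ez: "infdist (e \<sigma>) Z = 0" using eZ0[of \<sigma>] s K0c unfolding Dpq_def by auto
    show ?thesis
    proof (cases "dist (e \<sigma>) (G \<sigma>) \<le> \<nu>")
      case True
      then show ?thesis using infdist_triangle[of "G \<sigma>" Z "e \<sigma>"] ez by (simp add: dist_commute)
    next
      case False
      then have "infdist (e \<sigma>) U2 \<le> \<nu>" "infdist (G \<sigma>) U2 \<le> \<nu>" using fiber2[OF U2(2) F] by auto
      then show ?thesis by (cases "U2 = Z") auto
    qed
  qed
  have step3: "infdist (G \<sigma>) Z \<le> \<nu> + \<phi>0" if s: "\<sigma> \<in> {0..<K0}" for \<sigma>
  proof (rule field_le_epsilon)
    fix t :: real assume t: "0 < t"
    show "infdist (G \<sigma>) Z \<le> \<nu> + \<phi>0 + t"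
    proof (cases "infdist (G \<sigma>) Z \<le> \<nu>")
      case True then show ?thesis using \<phi>0 t by linarith
    next
      case False
      then have A: "U2 \<noteq> Z" "infdist (e \<sigma>) U2 \<le> \<nu>" using per3[OF s] by auto
      define \<sigma>' where "\<sigma>' = \<sigma> - \<phi>0 - t"
      show ?thesis
      proof (cases "\<sigma>' < 0")
        case True
        have "infdist (G \<sigma>) Z \<le> dist (G \<sigma>) p" using infdist_le[OF pZ(1)] .
        also have "\<dots> = \<sigma>" using Gp[of \<sigma>] s K0b by auto
        finally show ?thesis using True nu unfolding \<sigma>'_def by linarith
      next
        case False
        have s': "\<sigma>' \<in> {0..<K0}" using False s \<phi>0 t unfolding \<sigma>'_def by auto
        have dGG: "dist (G \<sigma>) (G \<sigma>') = \<phi>0 + t" using GG[of \<sigma> \<sigma>'] s s' K0b \<phi>0 t unfolding \<sigma>'_def by auto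
        show ?thesis
        proof (cases "infdist (G \<sigma>') Z \<le> \<nu>")
          case True
          then show ?thesis using infdist_triangle[of "G \<sigma>" Z "G \<sigma>'"] dGG by linarith
        next
          case False
          then have B: "infdist (e \<sigma>') U2 \<le> \<nu>" using per3[OF s'] by auto
          have r: "\<sigma> \<in> {0..dist p q}" "\<sigma>' \<in> {0..dist p q}" using s s' K0c unfolding Dpq_def by auto
          have "dist (e \<sigma>) (e \<sigma>') \<le> \<phi> \<nu>"
            using Wb[OF U2(1) A(1) nu A(2) _ B] eZ0[OF r(1)] eZ0[OF r(2)] nu by auto
          moreover have "dist (e \<sigma>) (e \<sigma>') = \<phi>0 + t" using gp_dist[OF e r] \<phi>0 t unfolding \<sigma>'_def by auto
          ultimately show ?thesis using t unfolding \<phi>0_def by simp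
        qed
      qed
    qed
  qed
  define \<alpha> where "\<alpha> = gprod p a b"
  define B where "B = 2*\<nu> + \<phi>0 + \<phi>1"
  have \<alpha>pa: "\<alpha> \<le> dist p a" using gprod_le[of p a b] unfolding \<alpha>_def .
  have \<alpha>0: "0 \<le> \<alpha>" using gprod_nonneg unfolding \<alpha>_def .
  have per4: "\<sigma> \<le> 2*\<nu> + \<phi>0 \<or> (U1 \<noteq> Z \<and> infdist (G \<sigma>) U1 \<le> \<nu>)"
    if s: "\<sigma> \<in> {0..<\<alpha>}" "\<sigma> < K0" for \<sigma>
  proof -
    have F: "{h \<sigma>, G \<sigma>} \<in> tri_fibers p a b h c g"
      using fib_x[of \<sigma> p a b h g c] s unfolding \<alpha>_def G_def Dbp_def by auto
    have hs: "\<sigma> \<le> infdist (h \<sigma>) Z" using hh[of \<sigma>] s \<alpha>pa by auto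
    have g3: "infdist (G \<sigma>) Z \<le> \<nu> + \<phi>0" using step3[of \<sigma>] s by auto
    show ?thesis
    proof (cases "dist (h \<sigma>) (G \<sigma>) \<le> \<nu>")
      case True
      then show ?thesis using infdist_triangle[of "h \<sigma>" Z "G \<sigma>"] hs g3 by linarith
    next
      case False
      then have "infdist (h \<sigma>) U1 \<le> \<nu>" "infdist (G \<sigma>) U1 \<le> \<nu>" using fiber2[OF U1(2) F] by auto
      then show ?thesis using hs nu \<phi>0 by (cases "U1 = Z") auto
    qed
  qed
  have KB: "B < K0" using K0a Dbig nu \<phi>0 unfolding B_def by linarith
  have fat2: "dist (G \<sigma>1) (G \<sigma>2) \<le> \<phi>1" if "\<sigma>1 \<in> {0..<K0}" "\<sigma>2 \<in> {0..<K0}" "U1 \<noteq> Z"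
    "infdist (G \<sigma>1) U1 \<le> \<nu>" "infdist (G \<sigma>2) U1 \<le> \<nu>" for \<sigma>1 \<sigma>2
  proof -
    have "infdist (G \<sigma>1) Z \<le> \<nu>'" "infdist (G \<sigma>2) Z \<le> \<nu>'" using step3 that(1,2) \<nu>' by force+
    then show ?thesis using Wb[OF U1(1) that(3) \<nu>'(3)] that(4,5) \<nu>'(2) unfolding \<phi>1_def by force
  qed
  have step4: "\<alpha> \<le> B"
  proof (rule ccontr)
    assume "\<not> ?thesis"
    then have m: "B < min \<alpha> K0" using KB by simp
    define \<delta> where "\<delta> = (min \<alpha> K0 - B) / 3"
    have \<delta>: "0 < \<delta>" "3 * \<delta> = min \<alpha> K0 - B" unfolding \<delta>_def using m by auto
    define s1 where "s1 = 2*\<nu> + \<phi>0 + \<delta>"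
    define s2 where "s2 = B + 2*\<delta>"
    have r: "s1 \<in> {0..<\<alpha>}" "s1 < K0" "s2 \<in> {0..<\<alpha>}" "s2 < K0" "2*\<nu> + \<phi>0 < s1" "2*\<nu> + \<phi>0 < s2"
      using \<delta> nu \<phi>0 \<phi>1 unfolding s1_def s2_def B_def by auto
    have f1: "U1 \<noteq> Z" "infdist (G s1) U1 \<le> \<nu>" using per4[OF r(1,2)] r(5) by auto
    have f2: "infdist (G s2) U1 \<le> \<nu>" using per4[OF r(3,4)] r(6) by auto
    have "dist (G s1) (G s2) \<le> \<phi>1" using fat2[OF _ _ f1 f2] r by auto
    moreover have "dist (G s1) (G s2) = \<phi>1 + \<delta>" using GG[of s1 s2] r K0b \<delta> \<phi>1 unfolding s1_def s2_def B_def by auto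
    ultimately show False using \<delta> by simp
  qed
  define e0 where "e0 = min \<epsilon> ((K0 - B) / 2)"
  have h2: "(K0 - B) / 2 < K0 - B" using KB by (simp add: field_simps)
  have h3: "e0 \<le> (K0 - B) / 2" unfolding e0_def by (rule min.cobounded2)
  have e0: "0 < e0" "e0 \<le> \<epsilon>" "B + e0 < K0" using h2 h3 apply (simp_all add: e0_def eps KB)
    using h2 h3 by linarith
  have B0: "\<nu> \<le> B" "2*\<nu> + \<phi>0 \<le> B" unfolding B_def using nu \<phi>0 \<phi>1 by auto
  have goal: "\<exists>s\<in>{0..dist a b}. dist (c s) p \<le> \<nu> + B + e0"
  proof (cases "U1 = Z")
    case True
    define \<tau> where "\<tau> = max \<alpha> \<nu> + e0"
    show ?thesis
    proof (cases "dist p a < \<tau>")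
      case True
      have "dist (c 0) p < \<tau>" using gp_start[OF c] True by (simp add: dist_commute)
      then show ?thesis using step4 B0 nu e0 unfolding \<tau>_def by (intro bexI[of _ 0]) auto
    next
      case False
      define s where "s = dist p a - \<tau>"
      have gs: "gprod a p b = dist p a - \<alpha>" using gprod_sum[of p a b] unfolding \<alpha>_def by simp
      have sr: "s \<in> {0..<gprod a p b}" using False gs e0 unfolding s_def \<tau>_def by auto
      have F: "{h \<tau>, c s} \<in> tri_fibers p a b h c g"
        using fib_y[OF sr, of h c g] unfolding s_def by simp
      have sab: "s \<in> {0..dist a b}" using sr gprod_le[of a b p] gprod_sym[of a p b] by auto
      have \<tau>r: "\<tau> \<in> {0..dist p a}" using False e0 nu unfolding \<tau>_def by auto
      have "dist (h \<tau>) (c s) \<le> \<nu>"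
      proof (rule ccontr)
        assume "\<not> ?thesis"
        then have "infdist (h \<tau>) Z \<le> \<nu>" using fiber2[OF U1(2) F] True by auto
        then show False using hh[OF \<tau>r] e0 unfolding \<tau>_def by auto
      qed
      then have "dist (c s) p \<le> \<nu> + \<tau>" using hp[OF \<tau>r] dist_triangle[of "c s" p "h \<tau>"]
        by (simp add: dist_commute)
      then show ?thesis using sab step4 B0 unfolding \<tau>_def by (intro bexI[of _ s]) auto
    qed
  next
    case False
    have gs: "gprod b p a = Dbp - \<alpha>" using gprod_sum[of b p a] gprod_sym[of p b a]
      unfolding \<alpha>_def Dbp_def by (simp add: dist_commute)
    have bleg: "(\<exists>s\<in>{0..dist a b}. dist (c s) p \<le> \<nu> + \<sigma>) \<or> infdist (G \<sigma>) U1 \<le> \<nu>"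
      if \<sigma>: "\<alpha> < \<sigma>" "\<sigma> \<le> Dbp" for \<sigma>
    proof -
      define s where "s = Dbp - \<sigma>"
      have sr: "s \<in> {0..<gprod b p a}" using \<sigma> gs unfolding s_def by auto
      have F: "{c (dist a b - s), G \<sigma>} \<in> tri_fibers p a b h c g"
        using fib_z[OF sr, of c g h] unfolding s_def G_def by simp
      have sab: "dist a b - s \<in> {0..dist a b}" using sr gprod_le[of b a p] gprod_sym[of b p a] by (auto simp: dist_commute)
      show ?thesis
      proof (cases "dist (c (dist a b - s)) (G \<sigma>) \<le> \<nu>")
        case True
        then have "dist (c (dist a b - s)) p \<le> \<nu> + \<sigma>"
          using Gp[of \<sigma>] \<sigma> \<alpha>0 dist_triangle[of "c (dist a b - s)" p "G \<sigma>"] by auto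
        then show ?thesis using sab by blast
      next
        case False
        then show ?thesis using fiber2[OF U1(2) F] by auto
      qed
    qed
    define \<sigma>2 where "\<sigma>2 = B + e0"
    have \<sigma>2: "\<alpha> < \<sigma>2" "\<sigma>2 \<le> Dbp" "\<sigma>2 \<in> {0..<K0}" using step4 e0 K0b B0 nu unfolding \<sigma>2_def by auto
    show ?thesis
    proof (cases "\<exists>s\<in>{0..dist a b}. dist (c s) p \<le> \<nu> + \<sigma>2")
      case True then show ?thesis unfolding \<sigma>2_def by (simp add: add.assoc)
    next
      case no2: False
      then have f2: "infdist (G \<sigma>2) U1 \<le> \<nu>" using bleg[OF \<sigma>2(1,2)] by auto
      show ?thesis
      proof (cases "\<alpha> \<le> 2*\<nu> + \<phi>0")
        case True
        define \<sigma>1 where "\<sigma>1 = \<alpha> + e0 / 2"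
        have \<sigma>1: "\<alpha> < \<sigma>1" "\<sigma>1 \<le> Dbp" "\<sigma>1 \<in> {0..<K0}" "\<sigma>1 \<le> B + e0"
          using True e0 \<alpha>0 K0b B0 \<phi>1 unfolding \<sigma>1_def B_def by auto
        show ?thesis
        proof (cases "\<exists>s\<in>{0..dist a b}. dist (c s) p \<le> \<nu> + \<sigma>1")
          case True then show ?thesis using \<sigma>1(4) by force
        next
          case False
          then have f1: "infdist (G \<sigma>1) U1 \<le> \<nu>" using bleg[OF \<sigma>1(1,2)] by auto
          have "dist (G \<sigma>1) (G \<sigma>2) \<le> \<phi>1" using fat2[OF \<sigma>1(3) \<sigma>2(3) \<open>U1 \<noteq> Z\<close> f1 f2] .
          moreover have le12: "\<sigma>1 \<le> \<sigma>2" using step4 e0 unfolding \<sigma>1_def \<sigma>2_def by simp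
          moreover have "dist (G \<sigma>1) (G \<sigma>2) = \<sigma>2 - \<sigma>1" using GG[of \<sigma>1 \<sigma>2] \<sigma>1 \<sigma>2 \<alpha>0 le12 by auto
          ultimately show ?thesis using True e0 unfolding \<sigma>1_def \<sigma>2_def B_def by auto
        qed
      next
        case False
        define \<delta> where "\<delta> = min (e0/2) ((\<alpha> - (2*\<nu> + \<phi>0))/2)"
        have d1: "\<delta> \<le> e0/2" unfolding \<delta>_def by (rule min.cobounded1)
        have d2: "\<delta> \<le> (\<alpha> - (2*\<nu> + \<phi>0))/2" unfolding \<delta>_def by (rule min.cobounded2)
        have \<delta>: "0 < \<delta>" "\<delta> \<le> e0/2" "2*\<delta> \<le> \<alpha> - (2*\<nu> + \<phi>0)"
          using False e0 d1 d2 by (simp_all add: \<delta>_def)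
        define \<sigma>' where "\<sigma>' = 2*\<nu> + \<phi>0 + \<delta>"
        have s': "\<sigma>' \<in> {0..<\<alpha>}" "\<sigma>' < K0" "\<sigma>' \<in> {0..<K0}" using \<delta> nu \<phi>0 step4 KB unfolding \<sigma>'_def by auto
        have f1: "infdist (G \<sigma>') U1 \<le> \<nu>" using per4[OF s'(1,2)] \<delta> unfolding \<sigma>'_def by auto
        have "dist (G \<sigma>') (G \<sigma>2) \<le> \<phi>1" using fat2[OF s'(3) \<sigma>2(3) \<open>U1 \<noteq> Z\<close> f1 f2] .
        moreover have "dist (G \<sigma>') (G \<sigma>2) = \<sigma>2 - \<sigma>'" using GG[of \<sigma>' \<sigma>2] s' \<sigma>2 K0b \<delta> e0 B0 \<phi>1
          unfolding \<sigma>'_def \<sigma>2_def B_def by auto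
        ultimately show ?thesis using \<delta> e0 unfolding \<sigma>'_def \<sigma>2_def B_def by auto
      qed
    qed
  qed
  then show ?thesis using e0 unfolding B_def \<phi>0_def \<phi>1_def \<nu>'_def by force
qed



lemma geo_near:
  fixes x1 y1 x2 y2 :: "'a::metric_space"
  assumes cat: "CAT0 TYPE('a)" and g1: "geodesic_path c1 x1 y1" and g2: "geodesic_path c2 x2 y2"
    and r: "dist x1 x2 \<le> r" "dist y1 y2 \<le> r" and t: "t \<in> {0..dist x1 y1}"
  shows "\<exists>u\<in>geodesic_segment c2 x2 y2. dist (c1 t) u \<le> r"
proof -
  define l where "l = (if dist x1 y1 = 0 then 0 else t / dist x1 y1)"
  have l: "0 \<le> l" "l \<le> 1" "l * dist x1 y1 = t" using t unfolding l_def by auto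
  have "dist (c1 (l * dist x1 y1)) (c2 (l * dist x2 y2)) \<le> (1 - l) * dist x1 x2 + l * dist y1 y2"
    using cat0_convex[OF cat g1 g2 l(1,2)] .
  also have "\<dots> \<le> (1 - l) * r + l * r" using l r by (intro add_mono mult_left_mono) auto
  also have "\<dots> = r" by (simp add: algebra_simps)
  finally have "dist (c1 t) (c2 (l * dist x2 y2)) \<le> r" using l by simp
  moreover have "c2 (l * dist x2 y2) \<in> geodesic_segment c2 x2 y2"
  proof -
    have "l * dist x2 y2 \<le> dist x2 y2" using l by (intro mult_left_le_one_le) auto
    then have "l * dist x2 y2 \<in> {0..dist x2 y2}" using l by auto
    then show ?thesis unfolding geodesic_segment_def by (rule imageI)
  qed
  ultimately show ?thesis by blast
qed

lemma sub_path:
  assumes c: "geodesic_path c x y" and u: "u \<in> {0..dist x y}" and v: "v \<in> {0..dist x y}"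
  shows "\<exists>k. geodesic_path k (c u) (c v) \<and> geodesic_segment k (c u) (c v) \<subseteq> geodesic_segment c x y"
proof (cases "u \<le> v")
  case True
  have k: "geodesic_path (\<lambda>t. c (u + t)) (c u) (c v)" using gp_sub[OF c _ True] u v by auto
  have d: "dist (c u) (c v) = v - u" using gp_dist[OF c u v] True by auto
  have "(\<lambda>t. c (u + t)) ` {0..v - u} \<subseteq> c ` {0..dist x y}"
  proof
    fix z assume "z \<in> (\<lambda>t. c (u + t)) ` {0..v - u}"
    then obtain t where "t \<in> {0..v-u}" "z = c (u + t)" by blast
    moreover then have "u + t \<in> {0..dist x y}" using u v by auto
    ultimately show "z \<in> c ` {0..dist x y}" by blast
  qed
  then show ?thesis using k unfolding geodesic_segment_def d by blast
next
  case False
  have k: "geodesic_path (\<lambda>t. c (u - t)) (c u) (c v)" using gp_sub_rev[OF c, of v u] False u v by auto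
  have d: "dist (c u) (c v) = u - v" using gp_dist[OF c u v] False by auto
  have "(\<lambda>t. c (u - t)) ` {0..u - v} \<subseteq> c ` {0..dist x y}"
  proof
    fix z assume "z \<in> (\<lambda>t. c (u - t)) ` {0..u - v}"
    then obtain t where "t \<in> {0..u-v}" "z = c (u - t)" by blast
    moreover then have "u - t \<in> {0..dist x y}" using u v by auto
    ultimately show "z \<in> c ` {0..dist x y}" by blast
  qed
  then show ?thesis using k unfolding geodesic_segment_def d by blast
qed

lemma near_set:
  fixes x1 y1 x2 y2 :: "'a::metric_space"
  assumes cat: "CAT0 TYPE('a)" and g1: "geodesic_path c1 x1 y1" and g2: "geodesic_path c2 x2 y2"
    and r: "dist x1 x2 \<le> r" "dist y1 y2 \<le> r" and sub: "geodesic_segment c2 x2 y2 \<subseteq> S"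
  shows "geodesic_segment c1 x1 y1 \<subseteq> nbhd r S"
proof
  fix z assume "z \<in> geodesic_segment c1 x1 y1"
  then obtain t where t: "t \<in> {0..dist x1 y1}" "z = c1 t" unfolding geodesic_segment_def by auto
  obtain u where "u \<in> geodesic_segment c2 x2 y2" "dist (c1 t) u \<le> r" using geo_near[OF cat g1 g2 r t(1)] by blast
  then show "z \<in> nbhd r S" unfolding nbhd_def using t sub infdist_le2 by blast
qed

lemma nbhd_mono: assumes "A \<subseteq> nbhd r S" "S \<subseteq> T" "S \<noteq> {}" shows "A \<subseteq> nbhd r T"
proof
  fix x assume "x \<in> A"
  then have "infdist x S \<le> r" using assms(1) unfolding nbhd_def by auto
  moreover have "infdist x T \<le> infdist x S" using infdist_mono[OF assms(2,3)] .
  ultimately show "x \<in> nbhd r T" unfolding nbhd_def by auto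
qed

lemma nbhd_Un: "A \<subseteq> nbhd r S \<Longrightarrow> B \<subseteq> nbhd r S \<Longrightarrow> A \<union> B \<subseteq> nbhd r S" by auto

lemma seg_ne: "geodesic_path c x y \<Longrightarrow> geodesic_segment c x y \<noteq> {}"
  unfolding geodesic_segment_def by auto

lemma img_mem: "f ` {0..d} \<subseteq> N \<Longrightarrow> d = d' \<Longrightarrow> z = f w \<Longrightarrow> w \<in> {0..d'} \<Longrightarrow> z \<in> N"
  by blast

lemma slim_points:
  fixes p a b q :: "'a::metric_space"
  assumes cat: "CAT0 TYPE('a)" and Q: "geod_quad p a b q q1 q2 q3 q4"
    and sp: "sp \<in> {0..dist a b}" and sq: "sq \<in> {0..dist a b}"
    and dp: "dist (q2 sp) p \<le> r" and dq: "dist (q2 sq) q \<le> r"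
  shows "quad_slim r p a b q q1 q2 q3 q4"
proof -
  have g1: "geodesic_path q1 p a" and g2: "geodesic_path q2 a b" and g3: "geodesic_path q3 b q"
    and g4: "geodesic_path q4 q p" using Q unfolding geod_quad_def by auto
  define S1 where "S1 = geodesic_segment q1 p a"
  define S2 where "S2 = geodesic_segment q2 a b"
  define S3 where "S3 = geodesic_segment q3 b q"
  define S4 where "S4 = geodesic_segment q4 q p"
  have r0: "0 \<le> r" using dp zero_le_dist order_trans by blast
  have a0: "q2 0 = a" using gp_start[OF g2] .
  have bL: "q2 (dist a b) = b" using gp_end[OF g2] .
  have L: "0 \<in> {0..dist a b}" "dist a b \<in> {0..dist a b}" by auto
  obtain k1 where k1: "geodesic_path k1 (q2 sp) a" "geodesic_segment k1 (q2 sp) a \<subseteq> S2"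
    using sub_path[OF g2 sp L(1)] a0 unfolding S2_def by auto
  obtain k3 where k3: "geodesic_path k3 b (q2 sq)" "geodesic_segment k3 b (q2 sq) \<subseteq> S2"
    using sub_path[OF g2 L(2) sq] bL unfolding S2_def by auto
  obtain k4 where k4: "geodesic_path k4 (q2 sq) (q2 sp)" "geodesic_segment k4 (q2 sq) (q2 sp) \<subseteq> S2"
    using sub_path[OF g2 sq sp] unfolding S2_def by auto
  have ne: "S1 \<noteq> {}" "S2 \<noteq> {}" "S3 \<noteq> {}" "S4 \<noteq> {}" unfolding S1_def S2_def S3_def S4_def
    using seg_ne g1 g2 g3 g4 by auto
  have A1: "S1 \<subseteq> nbhd r S2" unfolding S1_def
    using near_set[OF cat g1 k1(1) _ _ k1(2)] dp r0 by (simp add: dist_commute)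
  have A3: "S3 \<subseteq> nbhd r S2" unfolding S3_def
    using near_set[OF cat g3 k3(1) _ _ k3(2)] dq r0 by (simp add: dist_commute)
  have A4: "S4 \<subseteq> nbhd r S2" unfolding S4_def
    using near_set[OF cat g4 k4(1) _ _ k4(2)] dp dq by (simp add: dist_commute)
  have A2: "S2 \<subseteq> nbhd r (S1 \<union> S3 \<union> S4)"
  proof
    fix z assume "z \<in> S2"
    then obtain t where t: "t \<in> {0..dist a b}" "z = q2 t" unfolding S2_def geodesic_segment_def by auto
    show "z \<in> nbhd r (S1 \<union> S3 \<union> S4)"
    proof (cases "t \<le> sp")
      case True
      have k: "geodesic_path (\<lambda>u. q2 (sp - u)) (q2 sp) (q2 0)" using gp_sub_rev[OF g2, of 0 sp] sp by auto
      have "(\<lambda>u. q2 (sp - u)) ` {0..dist (q2 sp) (q2 0)} \<subseteq> nbhd r S1"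
        using near_set[OF cat k g1] dp r0 a0 unfolding S1_def geodesic_segment_def by (simp add: dist_commute)
      moreover have "dist (q2 sp) (q2 0) = sp" using gp_dist[OF g2 sp L(1)] sp by auto
      moreover have "z = (\<lambda>u. q2 (sp - u)) (sp - t)" using t by simp
      moreover have "sp - t \<in> {0..sp}" using True t by auto
      ultimately have "z \<in> nbhd r S1" by (rule img_mem)
      then show ?thesis using nbhd_mono[of "{z}" r S1 "S1 \<union> S3 \<union> S4"] ne by auto
    next
      case nsp: False
      show ?thesis
      proof (cases "sq \<le> t")
        case True
        have k: "geodesic_path (\<lambda>u. q2 (dist a b - u)) (q2 (dist a b)) (q2 sq)"
          using gp_sub_rev[OF g2, of sq "dist a b"] sq by auto
        have "(\<lambda>u. q2 (dist a b - u)) ` {0..dist (q2 (dist a b)) (q2 sq)} \<subseteq> nbhd r S3"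
          using near_set[OF cat k g3] dq r0 bL unfolding S3_def geodesic_segment_def by (simp add: dist_commute)
        moreover have "dist (q2 (dist a b)) (q2 sq) = dist a b - sq" using gp_dist[OF g2 L(2) sq] sq by auto
        moreover have "z = (\<lambda>u. q2 (dist a b - u)) (dist a b - t)" using t by simp
        moreover have "dist a b - t \<in> {0..dist a b - sq}" using True t by auto
        ultimately have "z \<in> nbhd r S3" by (rule img_mem)
        then show ?thesis using nbhd_mono[of "{z}" r S3 "S1 \<union> S3 \<union> S4"] ne by auto
      next
        case False
        have sl: "sp \<le> sq" using nsp False by auto
        have k: "geodesic_path (\<lambda>u. q2 (sp + u)) (q2 sp) (q2 sq)" using gp_sub[OF g2 _ sl] sp sq by auto
        have rq4: "geodesic_path (\<lambda>u. q4 (dist q p - u)) p q" using gp_rev[OF g4] .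
        have segsub: "geodesic_segment (\<lambda>u. q4 (dist q p - u)) p q \<subseteq> S4"
          unfolding S4_def geodesic_segment_def by (auto simp: dist_commute)
        have "(\<lambda>u. q2 (sp + u)) ` {0..dist (q2 sp) (q2 sq)} \<subseteq> nbhd r S4"
          using near_set[OF cat k rq4 dp dq segsub] unfolding geodesic_segment_def .
        moreover have "dist (q2 sp) (q2 sq) = sq - sp" using gp_dist[OF g2 sp sq] sl by auto
        moreover have "z = (\<lambda>u. q2 (sp + u)) (t - sp)" using t by simp
        moreover have "t - sp \<in> {0..sq - sp}" using nsp False t by auto
        ultimately have "z \<in> nbhd r S4" by (rule img_mem)
        then show ?thesis using nbhd_mono[of "{z}" r S4 "S1 \<union> S3 \<union> S4"] ne by auto
      qed
    qed
  qed
  show ?thesis unfolding quad_slim_def Let_def S1_def[symmetric] S2_def[symmetric] S3_def[symmetric] S4_def[symmetric]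
    using A2 nbhd_mono[OF A1, of "S2 \<union> S3 \<union> S4"] nbhd_mono[OF A3, of "S1 \<union> S2 \<union> S4"]
      nbhd_mono[OF A4, of "S1 \<union> S2 \<union> S3"] ne by auto
qed



lemma nb_lim: assumes "\<And>e. 0 < e \<Longrightarrow> A \<subseteq> nbhd (R + e) X" "R \<le> D" shows "A \<subseteq> nbhd D X"
proof
  fix y assume y: "y \<in> A"
  have "infdist y X \<le> R"
  proof (rule field_le_epsilon)
    fix e :: real assume "0 < e"
    then show "infdist y X \<le> R + e" using assms(1) y unfolding nbhd_def by blast
  qed
  then show "y \<in> nbhd D X" using assms(2) unfolding nbhd_def by auto
qed

lemma slim_lim: assumes "\<And>e. 0 < e \<Longrightarrow> quad_slim (R + e) v1 v2 v3 v4 q1 q2 q3 q4" "R \<le> D"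
  shows "quad_slim D v1 v2 v3 v4 q1 q2 q3 q4"
  using assms unfolding quad_slim_def Let_def by (meson nb_lim)

theorem lemma2p11:
  fixes \<C> :: "'a::complete_space set set"
    and \<nu> :: real and \<phi> :: "real \<Rightarrow> real"
    and Z :: "'a set" and a b :: 'a
    and q1 q2 q3 q4 :: "real \<Rightarrow> 'a"
  assumes "CAT0 TYPE('a)"
    and "\<forall>C\<in>\<C>. C \<noteq> {} \<and> closed C \<and> geod_convex C"
    and "\<nu> \<ge> 0" and "\<forall>r\<ge>0. \<phi> r \<ge> 0"
    and "rel_hyp_pair \<nu> \<phi> \<C>"
    and "Z \<in> \<C>"
    and "geod_quad (closest_proj Z a) a b (closest_proj Z b) q1 q2 q3 q4"
  shows "(let \<nu>' = 4 * \<nu> + 2 * \<phi> \<nu>; \<nu>'' = 4 * \<nu> + 2 * \<phi> \<nu>' in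
          dist (closest_proj Z a) (closest_proj Z b) \<le> \<phi> \<nu>' + 2 * \<nu> + 3 * \<nu>' \<or>
          quad_slim (\<nu>' + \<nu>'') (closest_proj Z a) a b (closest_proj Z b) q1 q2 q3 q4)"
proof -
  note cat = assms(1)
  have Zp: "Z \<noteq> {}" "closed Z" "geod_convex Z" using assms(2,6) by auto
  define p where "p = closest_proj Z a"
  define q where "q = closest_proj Z b"
  have pZ: "p \<in> Z" "\<forall>z\<in>Z. dist a p \<le> dist a z" unfolding p_def using closest_proj_props[OF cat Zp] by auto
  have qZ: "q \<in> Z" "\<forall>z\<in>Z. dist b q \<le> dist b z" unfolding q_def using closest_proj_props[OF cat Zp] by auto
  have geo: "\<And>x y::'a. \<exists>g. geodesic_path g x y" using cat0_geodesic[OF cat] by blast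
  have Q: "geod_quad p a b q q1 q2 q3 q4" using assms(7) unfolding p_def q_def .
  have g2: "geodesic_path q2 a b" using Q unfolding geod_quad_def by auto
  define \<nu>' where "\<nu>' = 4 * \<nu> + 2 * \<phi> \<nu>"
  define \<nu>'' where "\<nu>'' = 4 * \<nu> + 2 * \<phi> \<nu>'"
  define R where "R = 3*\<nu> + \<phi> \<nu> + \<phi> (4*\<nu>+2*\<phi> \<nu>)"
  have \<phi>0: "0 \<le> \<phi> \<nu>" using assms(3,4) by blast
  have \<phi>1: "0 \<le> \<phi> \<nu>'" using assms(3,4) \<phi>0 unfolding \<nu>'_def by auto
  have RD: "R \<le> \<nu>' + \<nu>''" unfolding R_def \<nu>''_def using \<phi>0 \<phi>1 assms(3) unfolding \<nu>'_def by auto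
  have "dist p q \<le> \<phi> \<nu>' + 2 * \<nu> + 3 * \<nu>' \<or> quad_slim (\<nu>' + \<nu>'') p a b q q1 q2 q3 q4"
  proof (cases "dist p q \<le> \<phi> \<nu>' + 2 * \<nu> + 3 * \<nu>'")
    case True then show ?thesis by simp
  next
    case False
    have thr: "\<phi> (4*\<nu>+2*\<phi> \<nu>) + 14*\<nu> + 6*\<phi> \<nu> < dist p q" using False unfolding \<nu>'_def by simp
    have thr': "\<phi> (4*\<nu>+2*\<phi> \<nu>) + 14*\<nu> + 6*\<phi> \<nu> < dist q p" using thr by (simp add: dist_commute)
    have "quad_slim (R + e) p a b q q1 q2 q3 q4" if e: "0 < e" for e
    proof -
      obtain sp where sp: "sp \<in> {0..dist a b}" "dist (q2 sp) p \<le> R + e"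
        using main_L[OF geo Zp(3) assms(6) Zp(1) assms(3,4,5) pZ qZ thr g2 e] unfolding R_def by blast
      have rg: "geodesic_path (\<lambda>t. q2 (dist a b - t)) b a" using gp_rev[OF g2] .
      obtain s where s: "s \<in> {0..dist b a}" "dist (q2 (dist a b - s)) q \<le> R + e"
        using main_L[OF geo Zp(3) assms(6) Zp(1) assms(3,4,5) qZ pZ thr' rg e] unfolding R_def by blast
      have sq: "dist a b - s \<in> {0..dist a b}" using s(1) by (auto simp: dist_commute)
      show ?thesis using slim_points[OF cat Q sp(1) sq sp(2) s(2)] .
    qed
    then have "quad_slim (\<nu>' + \<nu>'') p a b q q1 q2 q3 q4" using slim_lim RD by blast
    then show ?thesis by simp
  qed
  then show ?thesis unfolding Let_def p_def q_def \<nu>'_def \<nu>''_def .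
qed

end
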